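(* Let $k\ge0$ be an integer and $a,b\in\mathbb{C}$ generic (with $b\neq\pm(\tfrac12+j)$ for integers $0\le j<k$, and no lower parameter below a nonpositive integer). Define the polynomial of degree $2k$ in $n$ $$Q_k^{(3)}(n;a;b)=\frac{4^k}{(\tfrac12+b)_k(\tfrac12-b)_k}\sum_{j=0}^{k}\frac{(-n)_j(\tfrac n2+\tfrac a2)_j(-k)_j}{j!}\,\bigl(\tfrac14-\tfrac k2+\tfrac b2-\tfrac n2+j\bigr)_{k-j}\bigl(\tfrac14-\tfrac k2-\tfrac b2-\tfrac n2+j\bigr)_{k-j},$$ i.e. $\frac{4^k(\frac14-\frac k2+\frac b2-\frac n2)_k(\frac14-\frac k2-\frac b2-\frac n2)_k}{(\frac12+b)_k(\frac12-b)_k}\,{}_3F_2\!\left[\begin{smallmatrix}-n,\ \frac n2+\frac a2,\ -k\\ \frac14-\frac k2+\frac b2-\frac n2,\ \frac14-\frac k2-\frac b2-\frac n2\end{smallmatrix}\big|1\right]$. Then, near $x=0$, $${}_3F_2\!\left[\begin{matrix}\tfrac a3,\ \tfrac13+\tfrac a3,\ \tfrac23+\tfrac a3\\ \tfrac34+\tfrac k2+\tfrac a2+\tfrac b2,\ \tfrac34+\tfrac k2+\tfrac a2-\tfrac b2\end{matrix}\,\Big|\,-\frac{27x}{(1-4x)^3}\right]=(1-4x)^a\sum_{n=0}^\infty\frac{(a)_n(\tfrac12-k-b)_n(\tfrac12-k+b)_n}{n!\,(\tfrac34+\tfrac k2+\tfrac a2+\tfrac b2)_n(\tfrac34+\tfrac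 k2+\tfrac a2-\tfrac b2)_n}\,Q_k^{(3)}(n;a;b)\,x^n.$$
   Context: $(c)_n$ denotes the Pochhammer symbol $c(c+1)\cdots(c+n-1)$, $(c)_0=1$; ${}_pF_q$ is the generalized hypergeometric series $\sum_n \frac{\prod(a_i)_n}{n!\prod(b_i)_n}x^n$. *)

theory Defs
  imports "HOL-Analysis.Analysis"
begin

definition hyp_term :: "complex list \<Rightarrow> complex list \<Rightarrow> complex \<Rightarrow> nat \<Rightarrow> complex" where
  "hyp_term as bs z n =
     (\<Prod>c\<leftarrow>as. pochhammer c n) / (fact n * (\<Prod>c\<leftarrow>bs. pochhammer c n)) * z ^ n"

definition hypF :: "complex list \<Rightarrow> complex list \<Rightarrow> complex \<Rightarrow> complex" where
  "hypF as bs z = (\<Sum>n. hyp_term as bs z n)"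

definition Q3 :: "nat \<Rightarrow> nat \<Rightarrow> complex \<Rightarrow> complex \<Rightarrow> complex" where
  "Q3 k n a b =
    4 ^ k / (pochhammer (1/2 + b) k * pochhammer (1/2 - b) k) *
    (\<Sum>j=0..k. pochhammer (- of_nat n) j * pochhammer (of_nat n / 2 + a / 2) j
        * pochhammer (- of_nat k) j / fact j
        * pochhammer (1/4 - of_nat k / 2 + b / 2 - of_nat n / 2 + of_nat j) (k - j)
        * pochhammer (1/4 - of_nat k / 2 - b / 2 - of_nat n / 2 + of_nat j) (k - j))"

definition rhs_term :: "nat \<Rightarrow> complex \<Rightarrow> complex \<Rightarrow> complex \<Rightarrow> nat \<Rightarrow> complex" where
  "rhs_term k a b x n =
     pochhammer a n * pochhammer (1/2 - of_nat k - b) n * pochhammer (1/2 - of_nat k + b) n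
     / (fact n * pochhammer (3/4 + of_nat k / 2 + a / 2 + b / 2) n
               * pochhammer (3/4 + of_nat k / 2 + a / 2 - b / 2) n)
     * Q3 k n a b * x ^ n"

end

theory Submission
  imports Defs "HOL-Computational_Algebra.Formal_Power_Series" "HOL-Analysis.Analysis"
begin


lemma poch_nat_fact:
  "pochhammer (- of_nat n :: complex) m = (-1)^m * of_nat (n choose m) * fact m"
proof -
  have "(of_nat (n choose m) :: complex) = (of_nat n :: complex) gchoose m" by (simp add: binomial_gbinomial)
  also have "\<dots> = (-1)^m * pochhammer (- of_nat n) m / fact m" by (rule gbinomial_pochhammer)
  finally have "(-1)^m * of_nat (n choose m) * fact m = (-1)^m * (-1)^m * pochhammer (- of_nat n :: complex) m"
    by simp
  also have "(-1)^m * (-1)^m = (1::complex)" by (simp add: power_mult_distrib[symmetric])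
  finally show ?thesis by simp
qed

lemma poch_split_E:
  assumes "m \<le> n"
  shows "pochhammer (X::complex) n = (-1)^m * pochhammer (1 - X - of_nat n) m * pochhammer X (n-m)"
proof -
  have "pochhammer X n = pochhammer X (n-m) * pochhammer (X + of_nat (n-m)) (n - (n-m))"
    using pochhammer_product[of "n-m" n X] by simp
  also have "n - (n-m) = m" using assms by simp
  also have "X + of_nat (n-m) = (X + of_nat n - 1) - of_nat m + 1" using assms by (simp add: of_nat_diff)
  also have "pochhammer \<dots> m = (-1)^m * pochhammer (-(X + of_nat n - 1)) m" by (rule pochhammer_minus')
  also have "-(X + of_nat n - 1) = 1 - X - of_nat n" by simp
  finally show ?thesis by (simp add: mult_ac)
qed

lemma alg1: fixes s e f c P N Q R :: complex
  assumes "e \<noteq> 0" "c \<noteq> 0" "f \<noteq> 0" "s * s = 1"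
  shows "s * e * P * (s * N * f * Q * R / (f * c * e)) = N * P * R * (Q / c)"
proof -
  have "s * e * P * (s * N * f * Q * R / (f * c * e)) = (s * s) * N * P * R * (Q / c) * (f / f) * (e / e)"
    by (simp add: mult_ac)
  also have "\<dots> = N * P * R * (Q / c)" using assms by simp
  finally show ?thesis .
qed

lemma alg2: fixes s d c f A N B P :: complex
  assumes "d \<noteq> 0" "c \<noteq> 0" "f \<noteq> 0"
  shows "s * A / c * (N * B * P) = d * P * (s * N * f * A * B / (f * c * d))"
proof -
  have "d * P * (s * N * f * A * B / (f * c * d)) = s * A / c * (N * B * P) * (f / f) * (d / d)"
    by (simp add: mult_ac)
  also have "\<dots> = s * A / c * (N * B * P)" using assms by simp
  finally show ?thesis by simp
qed

lemma sheppard: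
  fixes A B C D E :: complex and n :: nat
  assumes E: "E = 1 + B - D - of_nat n"
  assumes hC: "pochhammer C n \<noteq> 0" and hD: "pochhammer D n \<noteq> 0" and hE: "pochhammer E n \<noteq> 0"
  shows "pochhammer D n * (\<Sum>m\<le>n. pochhammer (-of_nat n) m * pochhammer A m * pochhammer B m
            / (fact m * pochhammer C m * pochhammer D m))
       = pochhammer (D-B) n * (\<Sum>m\<le>n. pochhammer (-of_nat n) m * pochhammer (C-A) m * pochhammer B m
            / (fact m * pochhammer C m * pochhammer E m))"
proof -
  have Cm: "pochhammer C m \<noteq> 0" if "m \<le> n" for m using pochhammer_neq_0_mono[OF hC that] .
  have Dm: "pochhammer D m \<noteq> 0" if "m \<le> n" for m using pochhammer_neq_0_mono[OF hD that] .
  have Em: "pochhammer E m \<noteq> 0" if "m \<le> n" for m using pochhammer_neq_0_mono[OF hE that] .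
  have R1: "pochhammer (D-B) n * (\<Sum>m\<le>n. pochhammer (-of_nat n) m * pochhammer (C-A) m * pochhammer B m
            / (fact m * pochhammer C m * pochhammer E m))
     = (\<Sum>m\<le>n. of_nat (n choose m) * pochhammer (D-B) (n-m) * pochhammer B m * (pochhammer (C-A) m / pochhammer C m))"
    unfolding sum_distrib_left
  proof (rule sum.cong[OF refl])
    fix m assume "m \<in> {..n}" hence m: "m \<le> n" by simp
    have s: "pochhammer (D-B) n = (-1)^m * pochhammer E m * pochhammer (D-B) (n-m)"
    proof -
      have "1 - (D-B) - of_nat n = E" using E by simp
      thus ?thesis using poch_split_E[OF m, of "D-B"] by simp
    qed
    have pp: "(-1)^m * (-1)^m = (1::complex)" by (simp add: power_mult_distrib[symmetric])
    show "pochhammer (D-B) n * (pochhammer (-of_nat n) m * pochhammer (C-A) m * pochhammer B m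
            / (fact m * pochhammer C m * pochhammer E m)) =
          of_nat (n choose m) * pochhammer (D-B) (n-m) * pochhammer B m * (pochhammer (C-A) m / pochhammer C m)"
      unfolding s poch_nat_fact using alg1[OF Em[OF m] Cm[OF m] fact_nonzero pp] by (simp add: mult_ac)
  qed
  have R2: "pochhammer (C-A) m / pochhammer C m = (\<Sum>i\<le>n. (-1)^i * of_nat (m choose i) * pochhammer A i / pochhammer C i)"
    if m: "m \<le> n" for m
  proof -
    have c: "\<forall>i\<in>{0..<m}. C \<noteq> - of_nat i" using Cm[OF m] by (auto simp: pochhammer_eq_0_iff)
    have "pochhammer (C-A) m / pochhammer C m = (\<Sum>i\<in>{0..m}. pochhammer A i * pochhammer (- of_nat m) i / (of_nat (fact i) * pochhammer C i))"
      using Vandermonde_pochhammer[OF c, of A] by simp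
    also have "\<dots> = (\<Sum>i\<in>{0..m}. (-1)^i * of_nat (m choose i) * pochhammer A i / pochhammer C i)"
      by (rule sum.cong[OF refl]) (simp add: poch_nat_fact)
    also have "\<dots> = (\<Sum>i\<le>n. (-1)^i * of_nat (m choose i) * pochhammer A i / pochhammer C i)"
      by (rule sum.mono_neutral_left) (use m in auto)
    finally show ?thesis .
  qed
  have R4: "(\<Sum>m\<le>n. of_nat (n choose m) * of_nat (m choose i) * pochhammer B m * pochhammer (D-B) (n-m))
      = of_nat (n choose i) * pochhammer B i * pochhammer (D + of_nat i) (n-i)" if i: "i \<le> n" for i
  proof -
    have "(\<Sum>m\<le>n. of_nat (n choose m) * of_nat (m choose i) * pochhammer B m * pochhammer (D-B) (n-m))
        = (\<Sum>m\<in>{0+i..(n-i)+i}. of_nat (n choose m) * of_nat (m choose i) * pochhammer B m * pochhammer (D-B) (n-m))"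
      by (rule sum.mono_neutral_right) (use i in auto)
    also have "\<dots> = (\<Sum>l\<in>{0..n-i}. of_nat (n choose (l+i)) * of_nat ((l+i) choose i) * pochhammer B (l+i) * pochhammer (D-B) (n-(l+i)))"
      by (rule sum.shift_bounds_cl_nat_ivl)
    also have "\<dots> = (\<Sum>l\<in>{0..n-i}. of_nat (n choose i) * pochhammer B i * (of_nat ((n-i) choose l) * pochhammer (B + of_nat i) l * pochhammer (D-B) ((n-i)-l)))"
    proof (rule sum.cong[OF refl])
      fix l assume "l \<in> {0..n-i}" hence l: "l \<le> n - i" by simp
      have cm: "(n choose (l+i)) * ((l+i) choose i) = (n choose i) * ((n - i) choose l)"
        using choose_mult[of i "l+i" n] l i by simp
      have h1: "(of_nat (n choose (l+i)) * of_nat ((l+i) choose i) :: complex) = of_nat (n choose i) * of_nat ((n - i) choose l)"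
        using arg_cong[OF cm, of "of_nat :: nat \<Rightarrow> complex"] by simp
      have h2: "pochhammer B (l+i) = pochhammer B i * pochhammer (B + of_nat i) l"
        using pochhammer_product'[of B i l] by (simp add: add.commute)
      have h3: "n - (l+i) = (n-i) - l" by simp
      show "of_nat (n choose (l+i)) * of_nat ((l+i) choose i) * pochhammer B (l+i) * pochhammer (D-B) (n-(l+i))
          = of_nat (n choose i) * pochhammer B i * (of_nat ((n-i) choose l) * pochhammer (B + of_nat i) l * pochhammer (D-B) ((n-i)-l))"
        unfolding h2 h3 mult.assoc[symmetric] h1 by (simp only: ac_simps)
    qed
    also have "\<dots> = of_nat (n choose i) * pochhammer B i * (\<Sum>l\<le>n-i. of_nat ((n-i) choose l) * pochhammer (B + of_nat i) l * pochhammer (D-B) ((n-i)-l))"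
      by (simp add: sum_distrib_left atLeast0AtMost)
    also have "(\<Sum>l\<le>n-i. of_nat ((n-i) choose l) * pochhammer (B + of_nat i) l * pochhammer (D-B) ((n-i)-l)) = pochhammer (B + of_nat i + (D-B)) (n-i)"
      by (rule pochhammer_binomial_sum[symmetric])
    also have "B + of_nat i + (D-B) = D + of_nat i" by simp
    finally show ?thesis .
  qed
  have "pochhammer (D-B) n * (\<Sum>m\<le>n. pochhammer (-of_nat n) m * pochhammer (C-A) m * pochhammer B m
            / (fact m * pochhammer C m * pochhammer E m))
     = (\<Sum>m\<le>n. \<Sum>i\<le>n. of_nat (n choose m) * pochhammer (D-B) (n-m) * pochhammer B m * ((-1)^i * of_nat (m choose i) * pochhammer A i / pochhammer C i))"
    unfolding R1 by (rule sum.cong[OF refl]) (simp add: R2 sum_distrib_left)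
  also have "\<dots> = (\<Sum>i\<le>n. ((-1)^i * pochhammer A i / pochhammer C i) * (\<Sum>m\<le>n. of_nat (n choose m) * of_nat (m choose i) * pochhammer B m * pochhammer (D-B) (n-m)))"
    by (subst sum.swap) (simp add: sum_distrib_left mult_ac)
  also have "\<dots> = (\<Sum>i\<le>n. ((-1)^i * pochhammer A i / pochhammer C i) * (of_nat (n choose i) * pochhammer B i * pochhammer (D + of_nat i) (n-i)))"
    by (rule sum.cong[OF refl]) (simp add: R4)
  also have "\<dots> = pochhammer D n * (\<Sum>m\<le>n. pochhammer (-of_nat n) m * pochhammer A m * pochhammer B m
            / (fact m * pochhammer C m * pochhammer D m))"
    unfolding sum_distrib_left
  proof (rule sum.cong[OF refl])
    fix i assume "i \<in> {..n}" hence i: "i \<le> n" by simp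
    have s: "pochhammer D n = pochhammer D i * pochhammer (D + of_nat i) (n-i)"
      using pochhammer_product[OF i] .
    show "(-1)^i * pochhammer A i / pochhammer C i * (of_nat (n choose i) * pochhammer B i * pochhammer (D + of_nat i) (n-i)) =
        pochhammer D n * (pochhammer (-of_nat n) i * pochhammer A i * pochhammer B i / (fact i * pochhammer C i * pochhammer D i))"
      unfolding s poch_nat_fact by (rule alg2[OF Dm[OF i] Cm[OF i] fact_nonzero])
  qed
  finally show ?thesis ..
qed



definition gg :: "complex \<Rightarrow> complex \<Rightarrow> complex" where "gg b s = s^2 - b^2"
definition Pr :: "complex \<Rightarrow> complex \<Rightarrow> nat \<Rightarrow> complex" where "Pr b X n = (\<Prod>i<n. gg b (X + 2 * of_nat i))"
definition Hh :: "complex \<Rightarrow> complex \<Rightarrow> nat \<Rightarrow> complex" where "Hh b Y n = (\<Prod>i<n. gg b (Y + of_nat i))"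

lemma gg_even: "gg b (-s) = gg b s" by (simp add: gg_def)
lemma PrS: "Pr b X (Suc m) = Pr b X m * gg b (X + 2 * of_nat m)" by (simp add: Pr_def)
lemma PrS': "Pr b X (Suc m) = gg b X * Pr b (X + 2) m"
  unfolding Pr_def prod.lessThan_Suc_shift by (simp add: algebra_simps)
lemma HhS: "Hh b Y (Suc m) = Hh b Y m * gg b (Y + of_nat m)" by (simp add: Hh_def)

lemma two_step:
  assumes "P 0" "P 1" "\<And>n. P n \<Longrightarrow> P (Suc (Suc n))" shows "P n"
proof (induction n rule: less_induct)
  case (less n)
  show ?case
  proof (cases n)
    case 0 thus ?thesis using assms by simp
  next
    case (Suc m)
    show ?thesis
    proof (cases m)
      case 0 thus ?thesis using assms Suc by simp
    next
      case (Suc m') thus ?thesis using assms \<open>n = Suc m\<close> less by simp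
    qed
  qed
qed

lemma PF0: "Hh b (1/2) k = Pr b (1/2 - of_nat k) k"
proof (induction k rule: two_step)
  case 1 show ?case by (simp add: Hh_def Pr_def gg_def)
next
  case 2 show ?case by (simp add: Hh_def Pr_def gg_def power2_eq_square)
next
  case (3 k)
  have e1: "Hh b (1/2) (Suc (Suc k)) = Hh b (1/2) k * gg b (1/2 + of_nat k) * gg b (1/2 + of_nat (Suc k))"
    by (simp add: HhS)
  have e2: "Pr b (1/2 - of_nat (Suc (Suc k))) (Suc (Suc k)) = gg b (1/2 - of_nat (Suc (Suc k))) *
     (Pr b (1/2 - of_nat (Suc (Suc k)) + 2) k * gg b (1/2 - of_nat (Suc (Suc k)) + 2 + 2 * of_nat k))"
    unfolding PrS'[of b _ "Suc k"] PrS[of b _ k] ..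
  have e3: "1/2 - of_nat (Suc (Suc k)) + 2 = (1/2 - of_nat k :: complex)" by simp
  have e4: "gg b (1/2 - of_nat k + 2 * of_nat k) = gg b (1/2 + of_nat k)"
    by (simp add: gg_def algebra_simps)
  have e5: "gg b (1/2 - of_nat (Suc (Suc k))) = gg b (1/2 + of_nat (Suc k))"
    by (simp add: gg_def power2_eq_square algebra_simps)
  show ?case unfolding e1 e2 e4 e5 e3 3 by (simp only: ac_simps)
qed

lemma PF1: "Pr b (1/2 + of_nat k) 1 * Hh b (1/2) k = Hh b (1/2 - of_nat k) 1 * Pr b (-1/2 - of_nat k) k"
proof -
  have "Pr b (1/2 + of_nat k) 1 * Hh b (1/2) k = Hh b (1/2) (Suc k)"
    by (simp add: Pr_def HhS mult.commute)
  also have "\<dots> = Pr b (1/2 - of_nat (Suc k)) (Suc k)" by (rule PF0)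
  also have "1/2 - of_nat (Suc k) = (-1/2 - of_nat k :: complex)" by simp
  also have "Pr b (-1/2 - of_nat k) (Suc k) = Pr b (-1/2 - of_nat k) k * gg b (-1/2 - of_nat k + 2 * of_nat k)"
    by (rule PrS)
  also have "gg b (-1/2 - of_nat k + 2 * of_nat k) = gg b (1/2 - of_nat k)"
    by (simp add: gg_def power2_eq_square algebra_simps)
  finally show ?thesis by (simp add: Hh_def mult.commute)
qed

lemma PF_core:
  assumes gen: "\<And>j::int. \<bar>j\<bar> \<le> int (n + k) \<Longrightarrow> gg b (of_int j + 1/2) \<noteq> 0"
  shows "Pr b (3/2 + of_nat k - of_nat n) n * Hh b (1/2) k = Hh b (1/2 - of_nat k) n * Pr b (1/2 - of_nat k - of_nat n) k"
  using gen
proof (induction n rule: two_step)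
  case 1 show ?case using PF0[of b k] by (simp add: Pr_def Hh_def)
next
  case 2
  have q1: "(3/2 + of_nat k - of_nat (1::nat) :: complex) = 1/2 + of_nat k" by simp
  have q2: "(1/2 - of_nat k - of_nat (1::nat)::complex) = -1/2 - of_nat k" by simp
  show ?case unfolding q1 q2 by (rule PF1)
next
  case (3 n)
  have IH: "Pr b (3/2 + of_nat k - of_nat n) n * Hh b (1/2) k = Hh b (1/2 - of_nat k) n * Pr b (1/2 - of_nat k - of_nat n) k"
    using 3 by force
  define X0 :: complex where "X0 = 3/2 + of_nat k - of_nat (Suc (Suc n))"
  define Z0 :: complex where "Z0 = 1/2 - of_nat k - of_nat (Suc (Suc n))"
  have l1: "Pr b X0 (Suc (Suc n)) = gg b X0 * Pr b (3/2 + of_nat k - of_nat n) n * gg b (X0 + 2 + 2 * of_nat n)"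
  proof -
    have "Pr b X0 (Suc (Suc n)) = gg b X0 * (Pr b (X0 + 2) n * gg b (X0 + 2 + 2 * of_nat n))"
      unfolding PrS'[of b _ "Suc n"] PrS[of b _ n] ..
    moreover have "X0 + 2 = 3/2 + of_nat k - of_nat n" by (simp add: X0_def)
    ultimately show ?thesis by (simp add: mult.assoc)
  qed
  have l2: "Hh b (1/2 - of_nat k) (Suc (Suc n)) = Hh b (1/2 - of_nat k) n * gg b (1/2 - of_nat k + of_nat n) * gg b (1/2 - of_nat k + of_nat (Suc n))"
    by (simp add: HhS)
  have l3: "Pr b Z0 k * gg b (Z0 + 2 * of_nat k) = gg b Z0 * Pr b (1/2 - of_nat k - of_nat n) k"
  proof -
    have "Pr b Z0 k * gg b (Z0 + 2 * of_nat k) = gg b Z0 * Pr b (Z0 + 2) k"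
      by (metis PrS PrS')
    moreover have "Z0 + 2 = 1/2 - of_nat k - of_nat n" by (simp add: Z0_def)
    ultimately show ?thesis by simp
  qed
  have cnz: "gg b (Z0 + 2 * of_nat k) \<noteq> 0"
  proof -
    have "Z0 + 2 * of_nat k = of_int (int k - int n - 2) + 1/2" by (simp add: Z0_def algebra_simps)
    moreover have "\<bar>int k - int n - 2\<bar> \<le> int (Suc (Suc n) + k)" by simp
    ultimately show ?thesis using 3(2) by metis
  qed
  have key: "gg b X0 * gg b (X0 + 2 + 2 * of_nat n) * gg b (Z0 + 2 * of_nat k) =
      gg b (1/2 - of_nat k + of_nat n) * gg b (1/2 - of_nat k + of_nat (Suc n)) * gg b Z0"
    by (simp add: X0_def Z0_def gg_def power2_eq_square algebra_simps)
  have "(Pr b X0 (Suc (Suc n)) * Hh b (1/2) k) * gg b (Z0 + 2 * of_nat k)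
       = (Hh b (1/2 - of_nat k) (Suc (Suc n)) * Pr b Z0 k) * gg b (Z0 + 2 * of_nat k)"
  proof -
    have "(Pr b X0 (Suc (Suc n)) * Hh b (1/2) k) * gg b (Z0 + 2 * of_nat k)
        = (gg b X0 * gg b (X0 + 2 + 2 * of_nat n) * gg b (Z0 + 2 * of_nat k)) * (Pr b (3/2 + of_nat k - of_nat n) n * Hh b (1/2) k)"
      unfolding l1 by (simp only: ac_simps)
    also have "\<dots> = (gg b (1/2 - of_nat k + of_nat n) * gg b (1/2 - of_nat k + of_nat (Suc n)) * gg b Z0) * (Hh b (1/2 - of_nat k) n * Pr b (1/2 - of_nat k - of_nat n) k)"
      unfolding key IH ..
    also have "\<dots> = Hh b (1/2 - of_nat k) n * gg b (1/2 - of_nat k + of_nat n) * gg b (1/2 - of_nat k + of_nat (Suc n)) * (gg b Z0 * Pr b (1/2 - of_nat k - of_nat n) k)"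
      by (simp only: ac_simps)
    also have "\<dots> = (Hh b (1/2 - of_nat k) (Suc (Suc n)) * Pr b Z0 k) * gg b (Z0 + 2 * of_nat k)"
      unfolding l2 l3[symmetric] by (simp only: ac_simps)
    finally show ?thesis .
  qed
  hence "Pr b X0 (Suc (Suc n)) * Hh b (1/2) k = Hh b (1/2 - of_nat k) (Suc (Suc n)) * Pr b Z0 k"
    using cnz by simp
  thus ?case by (simp add: X0_def Z0_def)
qed



lemma conv1:
  assumes "2 * c1 = X - b" "2 * c2 = X + b"
  shows "4^n * pochhammer c1 n * pochhammer c2 n = Pr b X n"
proof (induction n)
  case 0 show ?case by (simp add: Pr_def)
next
  case (Suc n)
  have "4^(Suc n) * pochhammer c1 (Suc n) * pochhammer c2 (Suc n)
      = (4^n * pochhammer c1 n * pochhammer c2 n) * ((2 * c1 + 2* of_nat n) * (2 * c2 + 2* of_nat n))"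
    by (simp add: pochhammer_Suc algebra_simps)
  also have "(2 * c1 + 2* of_nat n) * (2 * c2 + 2* of_nat n) = gg b (X + 2 * of_nat n)"
    unfolding assms gg_def by (simp add: algebra_simps power2_eq_square)
  finally show ?case by (simp add: Suc PrS)
qed

lemma conv2:
  assumes "c1 = Y - b" "c2 = Y + b"
  shows "pochhammer c1 n * pochhammer c2 n = Hh b Y n"
proof (induction n)
  case 0 show ?case by (simp add: Hh_def)
next
  case (Suc n)
  have "pochhammer c1 (Suc n) * pochhammer c2 (Suc n)
      = (pochhammer c1 n * pochhammer c2 n) * ((c1 + of_nat n) * (c2 + of_nat n))"
    by (simp add: pochhammer_Suc algebra_simps)
  also have "(c1 + of_nat n) * (c2 + of_nat n) = gg b (Y + of_nat n)"
    unfolding assms gg_def by (simp add: algebra_simps power2_eq_square)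
  finally show ?case by (simp add: Suc HhS)
qed

lemma PF:
  fixes a b :: complex and n k :: nat
  assumes gen: "\<And>j::int. \<bar>j\<bar> \<le> int (n + k) \<Longrightarrow> gg b (of_int j + 1/2) \<noteq> 0"
  shows "4^n * pochhammer (3/4 + of_nat k / 2 - b / 2 - of_nat n / 2) n * pochhammer (3/4 + of_nat k / 2 + b / 2 - of_nat n / 2) n
          * pochhammer (1/2 + b) k * pochhammer (1/2 - b) k
       = 4^k * pochhammer (1/2 - of_nat k - b) n * pochhammer (1/2 - of_nat k + b) n
          * pochhammer (1/4 - of_nat k / 2 + b / 2 - of_nat n / 2) k * pochhammer (1/4 - of_nat k / 2 - b / 2 - of_nat n / 2) k"
proof -
  have c1: "4^n * pochhammer (3/4 + of_nat k / 2 - b / 2 - of_nat n / 2) n * pochhammer (3/4 + of_nat k / 2 + b / 2 - of_nat n / 2) n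
     = Pr b (3/2 + of_nat k - of_nat n) n" by (rule conv1) (simp_all add: algebra_simps)
  have c2: "pochhammer (1/2 - b) k * pochhammer (1/2 + b) k = Hh b (1/2) k" by (rule conv2) simp_all
  have c3: "pochhammer (1/2 - of_nat k - b) n * pochhammer (1/2 - of_nat k + b) n = Hh b (1/2 - of_nat k) n"
    by (rule conv2) simp_all
  have c4: "4^k * pochhammer (1/4 - of_nat k / 2 - b / 2 - of_nat n / 2) k * pochhammer (1/4 - of_nat k / 2 + b / 2 - of_nat n / 2) k
     = Pr b (1/2 - of_nat k - of_nat n) k" by (rule conv1) (simp_all add: algebra_simps)
  have "4^n * pochhammer (3/4 + of_nat k / 2 - b / 2 - of_nat n / 2) n * pochhammer (3/4 + of_nat k / 2 + b / 2 - of_nat n / 2) n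
          * pochhammer (1/2 + b) k * pochhammer (1/2 - b) k = Pr b (3/2 + of_nat k - of_nat n) n * Hh b (1/2) k"
    unfolding c1[symmetric] c2[symmetric] by (simp only: ac_simps)
  also have "\<dots> = Hh b (1/2 - of_nat k) n * Pr b (1/2 - of_nat k - of_nat n) k" by (rule PF_core[OF gen])
  also have "\<dots> = 4^k * pochhammer (1/2 - of_nat k - b) n * pochhammer (1/2 - of_nat k + b) n
          * pochhammer (1/4 - of_nat k / 2 + b / 2 - of_nat n / 2) k * pochhammer (1/4 - of_nat k / 2 - b / 2 - of_nat n / 2) k"
    unfolding c3[symmetric] c4[symmetric] by (simp only: ac_simps)
  finally show ?thesis .
qed



lemma alg3: fixes E F P Q N V W M x :: complex
  assumes "x \<noteq> 0" "E \<noteq> 0" "F \<noteq> 0"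
  shows "N * V * W / x * P * Q = (E * P) * (F * Q) * (N * W * V / (x * E * F))"
proof -
  have "(E * P) * (F * Q) * (N * W * V / (x * E * F)) = N * V * W / x * P * Q * (E / E) * (F / F)"
    by (simp add: mult_ac)
  also have "\<dots> = N * V * W / x * P * Q" using assms by simp
  finally show ?thesis by simp
qed

lemma alg4: fixes P Q Pm Qm N V K x :: complex
  assumes "x \<noteq> 0" "Pm \<noteq> 0" "Qm \<noteq> 0"
  shows "N * V * K / x * P * Q = (Pm * P) * (Qm * Q) * (N * K * V / (x * Pm * Qm))"
proof -
  have "(Pm * P) * (Qm * Q) * (N * K * V / (x * Pm * Qm)) = N * V * K / x * P * Q * (Pm / Pm) * (Qm / Qm)"
    by (simp add: mult_ac)
  also have "\<dots> = N * V * K / x * P * Q" using assms by simp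
  finally show ?thesis by simp
qed

lemma poch_nz_from_gen:
  fixes b p :: complex and n k :: nat
  assumes gen: "\<And>j::int. \<bar>j\<bar> \<le> int (n + k) \<Longrightarrow> gg b (of_int j + 1/2) \<noteq> 0"
    and dp: "p = 1/4 - of_nat k / 2 + c / 2 - of_nat n / 2" and c: "c = b \<or> c = -b"
  shows "pochhammer p (n + k) \<noteq> 0"
proof
  assume "pochhammer p (n + k) = 0"
  then obtain i where i: "i < n + k" and pi: "p = - of_nat i" by (auto simp: pochhammer_eq_0_iff)
  define j where "j = int k + int n - 2 * int i - 1"
  have "c = 2 * (p - 1/4 + of_nat k / 2 + of_nat n / 2)" using dp by (simp add: algebra_simps)
  also have "\<dots> = 2 * (- of_nat i - 1/4 + of_nat k / 2 + of_nat n / 2)" using pi by simp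
  also have "\<dots> = of_int j + 1/2" unfolding j_def by (simp add: algebra_simps)
  finally have cj: "c = of_int j + 1/2" .
  have "\<bar>j\<bar> \<le> int (n + k)" using i unfolding j_def by simp
  hence "gg b (of_int j + 1/2) \<noteq> 0" by (rule gen)
  moreover have "gg b (of_int j + 1/2) = 0" using c cj unfolding gg_def by auto
  ultimately show False by simp
qed

lemma STAR_gen:
  fixes a b e f v p q :: complex and n k :: nat
  assumes de: "e = 3/4 + of_nat k / 2 + a / 2 + b / 2" and df: "f = 3/4 + of_nat k / 2 + a / 2 - b / 2"
    and dv: "v = of_nat n / 2 + a / 2"
    and dp: "p = 1/4 - of_nat k / 2 + b / 2 - of_nat n / 2" and dq: "q = 1/4 - of_nat k / 2 - b / 2 - of_nat n / 2"
  assumes he: "pochhammer e n \<noteq> 0" and hf: "pochhammer f n \<noteq> 0"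
  assumes gen: "\<And>j::int. \<bar>j\<bar> \<le> int (n + k) \<Longrightarrow> gg b (of_int j + 1/2) \<noteq> 0"
  shows "4^n * pochhammer (1/2 + b) k * pochhammer (1/2 - b) k *
      (\<Sum>m\<le>n. pochhammer (- of_nat n) m * pochhammer v m * pochhammer (v + 1/2) m / fact m
          * pochhammer (e + of_nat m) (n - m) * pochhammer (f + of_nat m) (n - m))
    = 4^k * pochhammer (1/2 - of_nat k - b) n * pochhammer (1/2 - of_nat k + b) n *
      (\<Sum>j\<le>k. pochhammer (- of_nat n) j * pochhammer v j * pochhammer (- of_nat k) j / fact j
          * pochhammer (p + of_nat j) (k - j) * pochhammer (q + of_nat j) (k - j))"
proof -
  have hp: "pochhammer p (n + k) \<noteq> 0" using poch_nz_from_gen[OF gen dp] by simp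
  have hq: "pochhammer q (n + k) \<noteq> 0"
    using poch_nz_from_gen[OF gen, where p=q and c="-b"] dq by simp
  have pm: "pochhammer p m \<noteq> 0" if "m \<le> n + k" for m using pochhammer_neq_0_mono[OF hp that] .
  have qm: "pochhammer q m \<noteq> 0" if "m \<le> n + k" for m using pochhammer_neq_0_mono[OF hq that] .
  have em: "pochhammer e m \<noteq> 0" if "m \<le> n" for m using pochhammer_neq_0_mono[OF he that] .
  have fm: "pochhammer f m \<noteq> 0" if "m \<le> n" for m using pochhammer_neq_0_mono[OF hf that] .
  define T where "T = (\<Sum>m\<le>n. pochhammer (-of_nat n) m * pochhammer (v + 1/2) m * pochhammer v m
            / (fact m * pochhammer e m * pochhammer f m))"
  define S2 where "S2 = (\<Sum>m\<le>n. pochhammer (-of_nat n) m * pochhammer (e - (v + 1/2)) m * pochhammer v m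
            / (fact m * pochhammer e m * pochhammer p m))"
  define S3 where "S3 = (\<Sum>m\<le>n. pochhammer (-of_nat n) m * pochhammer (- of_nat k) m * pochhammer v m
            / (fact m * pochhammer p m * pochhammer q m))"
  have s1: "(\<Sum>m\<le>n. pochhammer (- of_nat n) m * pochhammer v m * pochhammer (v + 1/2) m / fact m
          * pochhammer (e + of_nat m) (n - m) * pochhammer (f + of_nat m) (n - m)) = pochhammer e n * pochhammer f n * T"
    unfolding T_def sum_distrib_left
  proof (rule sum.cong[OF refl])
    fix m assume "m \<in> {..n}" hence m: "m \<le> n" by simp
    show "pochhammer (- of_nat n) m * pochhammer v m * pochhammer (v + 1/2) m / fact m
          * pochhammer (e + of_nat m) (n - m) * pochhammer (f + of_nat m) (n - m) =
        pochhammer e n * pochhammer f n * (pochhammer (-of_nat n) m * pochhammer (v + 1/2) m * pochhammer v m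
            / (fact m * pochhammer e m * pochhammer f m))"
      unfolding pochhammer_product[OF m, of e] pochhammer_product[OF m, of f]
      by (rule alg3[OF fact_nonzero em[OF m] fm[OF m]])
  qed
  have sh1: "pochhammer f n * T = pochhammer (f - v) n * S2"
    unfolding T_def S2_def
  proof (rule sheppard)
    show "p = 1 + v - f - of_nat n" unfolding dp dv df by (simp add: field_simps)
  qed (use he hf pm[of n] in simp_all)
  have sh2: "pochhammer e n * S2 = pochhammer (e - v) n * S3"
  proof -
    have kk: "p - (e - (v + 1/2)) = - of_nat k" by (simp add: dp de dv field_simps)
    have S2': "S2 = (\<Sum>m\<le>n. pochhammer (-of_nat n) m * pochhammer (e - (v + 1/2)) m * pochhammer v m
            / (fact m * pochhammer p m * pochhammer e m))"
      unfolding S2_def by (simp add: mult_ac)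
    have "pochhammer e n * (\<Sum>m\<le>n. pochhammer (-of_nat n) m * pochhammer (e - (v + 1/2)) m * pochhammer v m
            / (fact m * pochhammer p m * pochhammer e m)) = pochhammer (e - v) n * (\<Sum>m\<le>n. pochhammer (-of_nat n) m * pochhammer (p - (e - (v + 1/2))) m * pochhammer v m
            / (fact m * pochhammer p m * pochhammer q m))"
    proof (rule sheppard)
      show "q = 1 + v - e - of_nat n" unfolding dq dv de by (simp add: field_simps)
    qed (use he pm[of n] qm[of n] in simp_all)
    thus ?thesis unfolding S3_def S2'[symmetric] kk .
  qed
  have s4: "(\<Sum>j\<le>k. pochhammer (- of_nat n) j * pochhammer v j * pochhammer (- of_nat k) j / fact j
          * pochhammer (p + of_nat j) (k - j) * pochhammer (q + of_nat j) (k - j)) = pochhammer p k * pochhammer q k * S3"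
  proof -
    define Y where "Y j = pochhammer (- of_nat n) j * pochhammer (- of_nat k) j * pochhammer v j
            / (fact j * pochhammer p j * pochhammer q j)" for j
    have "(\<Sum>j\<le>k. pochhammer (- of_nat n) j * pochhammer v j * pochhammer (- of_nat k) j / fact j
          * pochhammer (p + of_nat j) (k - j) * pochhammer (q + of_nat j) (k - j)) = (\<Sum>j\<le>k. pochhammer p k * pochhammer q k * Y j)"
    proof (rule sum.cong[OF refl])
      fix j assume "j \<in> {..k}" hence j: "j \<le> k" by simp
      have jj: "j \<le> n + k" using j by simp
      show "pochhammer (- of_nat n) j * pochhammer v j * pochhammer (- of_nat k) j / fact j
          * pochhammer (p + of_nat j) (k - j) * pochhammer (q + of_nat j) (k - j) = pochhammer p k * pochhammer q k * Y j"
        unfolding Y_def pochhammer_product[OF j, of p] pochhammer_product[OF j, of q]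
        by (rule alg4[OF fact_nonzero pm[OF jj] qm[OF jj]])
    qed
    also have "\<dots> = (\<Sum>j\<le>n+k. pochhammer p k * pochhammer q k * Y j)"
      by (rule sum.mono_neutral_left) (auto simp: Y_def pochhammer_of_nat_eq_0_lemma)
    also have "\<dots> = (\<Sum>j\<le>n. pochhammer p k * pochhammer q k * Y j)"
      by (rule sum.mono_neutral_right) (auto simp: Y_def pochhammer_of_nat_eq_0_lemma)
    also have "\<dots> = pochhammer p k * pochhammer q k * S3"
      unfolding S3_def Y_def sum_distrib_left ..
    finally show ?thesis .
  qed
  have fv: "f - v = 3/4 + of_nat k / 2 - b / 2 - of_nat n / 2" by (simp add: df dv field_simps)
  have ev: "e - v = 3/4 + of_nat k / 2 + b / 2 - of_nat n / 2" by (simp add: de dv field_simps)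
  have s5: "4^n * pochhammer (f - v) n * pochhammer (e - v) n * pochhammer (1/2 + b) k * pochhammer (1/2 - b) k
       = 4^k * pochhammer (1/2 - of_nat k - b) n * pochhammer (1/2 - of_nat k + b) n * pochhammer p k * pochhammer q k"
    unfolding fv ev dp dq by (rule PF[OF gen])
  have "4^n * pochhammer (1/2 + b) k * pochhammer (1/2 - b) k *
      (\<Sum>m\<le>n. pochhammer (- of_nat n) m * pochhammer v m * pochhammer (v + 1/2) m / fact m
          * pochhammer (e + of_nat m) (n - m) * pochhammer (f + of_nat m) (n - m))
     = (4^n * pochhammer (1/2 + b) k * pochhammer (1/2 - b) k * pochhammer e n) * (pochhammer f n * T)"
    unfolding s1 by (simp only: ac_simps)
  also have "\<dots> = 4^n * pochhammer (1/2 + b) k * pochhammer (1/2 - b) k * pochhammer (f - v) n * (pochhammer e n * S2)"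
    unfolding sh1 by (simp only: ac_simps)
  also have "\<dots> = (4^n * pochhammer (f - v) n * pochhammer (e - v) n * pochhammer (1/2 + b) k * pochhammer (1/2 - b) k) * S3"
    unfolding sh2 by (simp only: ac_simps)
  also have "\<dots> = 4^k * pochhammer (1/2 - of_nat k - b) n * pochhammer (1/2 - of_nat k + b) n * (pochhammer p k * pochhammer q k * S3)"
    unfolding s5 by (simp only: ac_simps)
  also have "\<dots> = 4^k * pochhammer (1/2 - of_nat k - b) n * pochhammer (1/2 - of_nat k + b) n *
      (\<Sum>j\<le>k. pochhammer (- of_nat n) j * pochhammer v j * pochhammer (- of_nat k) j / fact j
          * pochhammer (p + of_nat j) (k - j) * pochhammer (q + of_nat j) (k - j))"
    unfolding s4 ..
  finally show ?thesis .
qed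



lemma continuous_on_pochhammer_cx [continuous_intros]:
  fixes f :: "complex \<Rightarrow> complex"
  assumes "continuous_on A f" shows "continuous_on A (\<lambda>x. pochhammer (f x) n)"
  unfolding pochhammer_prod by (intro continuous_intros assms)

lemma cont_ext:
  fixes F G :: "complex \<Rightarrow> complex"
  assumes cF: "continuous_on UNIV F" and cG: "continuous_on UNIV G" and fS: "finite S"
    and eq: "\<And>b. b \<notin> S \<Longrightarrow> F b = G b"
  shows "F b0 = G b0"
proof -
  have ev: "eventually (\<lambda>b. b \<notin> S) (at b0)"
    using islimpt_finite[OF fS] islimpt_iff_eventually by blast
  have "isCont F b0" using cF by (simp add: continuous_on_eq_continuous_at)
  hence tF: "(F \<longlongrightarrow> F b0) (at b0)" by (simp add: isCont_def)
  have "isCont G b0" using cG by (simp add: continuous_on_eq_continuous_at)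
  hence tG: "(G \<longlongrightarrow> G b0) (at b0)" by (simp add: isCont_def)
  have "eventually (\<lambda>b. F b = G b) (at b0)" using ev by eventually_elim (rule eq)
  from Lim_transform_eventually[OF tF this] have "(G \<longlongrightarrow> F b0) (at b0)" .
  from tendsto_unique[OF at_neq_bot this tG] show ?thesis .
qed

lemma STAR_all:
  fixes a b :: complex and n k :: nat
  shows "4^n * pochhammer (1/2 + b) k * pochhammer (1/2 - b) k *
      (\<Sum>m\<le>n. pochhammer (- of_nat n) m * pochhammer (of_nat n / 2 + a / 2) m * pochhammer (of_nat n / 2 + a / 2 + 1/2) m / fact m
          * pochhammer (3/4 + of_nat k / 2 + a / 2 + b / 2 + of_nat m) (n - m)
          * pochhammer (3/4 + of_nat k / 2 + a / 2 - b / 2 + of_nat m) (n - m))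
    = 4^k * pochhammer (1/2 - of_nat k - b) n * pochhammer (1/2 - of_nat k + b) n *
      (\<Sum>j\<le>k. pochhammer (- of_nat n) j * pochhammer (of_nat n / 2 + a / 2) j * pochhammer (- of_nat k) j / fact j
          * pochhammer (1/4 - of_nat k / 2 + b / 2 - of_nat n / 2 + of_nat j) (k - j)
          * pochhammer (1/4 - of_nat k / 2 - b / 2 - of_nat n / 2 + of_nat j) (k - j))"
proof -
  define S :: "complex set" where "S = (\<lambda>i. - 2 * of_nat i - 3/2 - of_nat k - a) ` {..<n} \<union> (\<lambda>i. 2 * of_nat i + 3/2 + of_nat k + a) ` {..<n}
     \<union> (\<lambda>j. of_int j + 1/2) ` {-int (n+k)..int (n+k)} \<union> (\<lambda>j. -(of_int j + 1/2)) ` {-int (n+k)..int (n+k)}"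
  have fS: "finite S" unfolding S_def by simp
  show ?thesis
  proof (rule cont_ext[OF _ _ fS, where F = "\<lambda>b. 4^n * pochhammer (1/2 + b) k * pochhammer (1/2 - b) k *
      (\<Sum>m\<le>n. pochhammer (- of_nat n) m * pochhammer (of_nat n / 2 + a / 2) m * pochhammer (of_nat n / 2 + a / 2 + 1/2) m / fact m
          * pochhammer (3/4 + of_nat k / 2 + a / 2 + b / 2 + of_nat m) (n - m)
          * pochhammer (3/4 + of_nat k / 2 + a / 2 - b / 2 + of_nat m) (n - m))"
      and G = "\<lambda>b. 4^k * pochhammer (1/2 - of_nat k - b) n * pochhammer (1/2 - of_nat k + b) n *
      (\<Sum>j\<le>k. pochhammer (- of_nat n) j * pochhammer (of_nat n / 2 + a / 2) j * pochhammer (- of_nat k) j / fact j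
          * pochhammer (1/4 - of_nat k / 2 + b / 2 - of_nat n / 2 + of_nat j) (k - j)
          * pochhammer (1/4 - of_nat k / 2 - b / 2 - of_nat n / 2 + of_nat j) (k - j))"])
    show "continuous_on UNIV (\<lambda>b. 4^n * pochhammer (1/2 + b) k * pochhammer (1/2 - b) k *
      (\<Sum>m\<le>n. pochhammer (- of_nat n) m * pochhammer (of_nat n / 2 + a / 2) m * pochhammer (of_nat n / 2 + a / 2 + 1/2) m / fact m
          * pochhammer (3/4 + of_nat k / 2 + a / 2 + b / 2 + of_nat m) (n - m)
          * pochhammer (3/4 + of_nat k / 2 + a / 2 - b / 2 + of_nat m) (n - m)))"
      by (intro continuous_intros) auto
    show "continuous_on UNIV (\<lambda>b. 4^k * pochhammer (1/2 - of_nat k - b) n * pochhammer (1/2 - of_nat k + b) n *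
      (\<Sum>j\<le>k. pochhammer (- of_nat n) j * pochhammer (of_nat n / 2 + a / 2) j * pochhammer (- of_nat k) j / fact j
          * pochhammer (1/4 - of_nat k / 2 + b / 2 - of_nat n / 2 + of_nat j) (k - j)
          * pochhammer (1/4 - of_nat k / 2 - b / 2 - of_nat n / 2 + of_nat j) (k - j)))"
      by (intro continuous_intros) auto
  next
    fix b assume bS: "b \<notin> S"
    have he: "pochhammer (3/4 + of_nat k / 2 + a / 2 + b / 2) n \<noteq> 0"
    proof
      assume "pochhammer (3/4 + of_nat k / 2 + a / 2 + b / 2) n = 0"
      then obtain i where i: "i < n" and h: "3/4 + of_nat k / 2 + a / 2 + b / 2 = - of_nat i"
        by (auto simp: pochhammer_eq_0_iff)
      have "b = 2 * (3/4 + of_nat k / 2 + a / 2 + b / 2) - 3/2 - of_nat k - a" by (simp add: algebra_simps)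
      also have "\<dots> = - 2 * of_nat i - 3/2 - of_nat k - a" unfolding h by simp
      finally have "b \<in> S" unfolding S_def using i by blast
      with bS show False by simp
    qed
    have hf: "pochhammer (3/4 + of_nat k / 2 + a / 2 - b / 2) n \<noteq> 0"
    proof
      assume "pochhammer (3/4 + of_nat k / 2 + a / 2 - b / 2) n = 0"
      then obtain i where i: "i < n" and h: "3/4 + of_nat k / 2 + a / 2 - b / 2 = - of_nat i"
        by (auto simp: pochhammer_eq_0_iff)
      have "b = - 2 * (3/4 + of_nat k / 2 + a / 2 - b / 2) + 3/2 + of_nat k + a" by (simp add: algebra_simps)
      also have "\<dots> = 2 * of_nat i + 3/2 + of_nat k + a" unfolding h by simp
      finally have "b \<in> S" unfolding S_def using i by blast
      with bS show False by simp
    qed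
    have gen: "gg b (of_int j + 1/2) \<noteq> 0" if j: "\<bar>j\<bar> \<le> int (n + k)" for j :: int
    proof
      assume "gg b (of_int j + 1/2) = 0"
      hence "(b - (of_int j + 1/2)) * (b + (of_int j + 1/2)) = 0"
        unfolding gg_def by (simp add: algebra_simps power2_eq_square)
      hence "b - (of_int j + 1/2) = 0 \<or> b + (of_int j + 1/2) = 0" by (simp only: mult_eq_0_iff)
      hence "b = of_int j + 1/2 \<or> b = -(of_int j + 1/2)" by (simp only: eq_neg_iff_add_eq_0 right_minus_eq)
      moreover have "j \<in> {-int (n+k)..int (n+k)}" using j by auto
      ultimately have "b \<in> S" unfolding S_def by blast
      with bS show False by simp
    qed
    have "4^n * pochhammer (1/2 + b) k * pochhammer (1/2 - b) k *
      (\<Sum>m\<le>n. pochhammer (- of_nat n) m * pochhammer (of_nat n / 2 + a / 2) m * pochhammer (of_nat n / 2 + a / 2 + 1/2) m / fact m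
          * pochhammer (3/4 + of_nat k / 2 + a / 2 + b / 2 + of_nat m) (n - m)
          * pochhammer (3/4 + of_nat k / 2 + a / 2 - b / 2 + of_nat m) (n - m))
    = 4^k * pochhammer (1/2 - of_nat k - b) n * pochhammer (1/2 - of_nat k + b) n *
      (\<Sum>j\<le>k. pochhammer (- of_nat n) j * pochhammer (of_nat n / 2 + a / 2) j * pochhammer (- of_nat k) j / fact j
          * pochhammer (1/4 - of_nat k / 2 + b / 2 - of_nat n / 2 + of_nat j) (k - j)
          * pochhammer (1/4 - of_nat k / 2 - b / 2 - of_nat n / 2 + of_nat j) (k - j))"
      by (rule STAR_gen[OF refl refl refl refl refl he hf gen])
    thus "(\<lambda>b. 4^n * pochhammer (1/2 + b) k * pochhammer (1/2 - b) k *
      (\<Sum>m\<le>n. pochhammer (- of_nat n) m * pochhammer (of_nat n / 2 + a / 2) m * pochhammer (of_nat n / 2 + a / 2 + 1/2) m / fact m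
          * pochhammer (3/4 + of_nat k / 2 + a / 2 + b / 2 + of_nat m) (n - m)
          * pochhammer (3/4 + of_nat k / 2 + a / 2 - b / 2 + of_nat m) (n - m))) b =
      (\<lambda>b. 4^k * pochhammer (1/2 - of_nat k - b) n * pochhammer (1/2 - of_nat k + b) n *
      (\<Sum>j\<le>k. pochhammer (- of_nat n) j * pochhammer (of_nat n / 2 + a / 2) j * pochhammer (- of_nat k) j / fact j
          * pochhammer (1/4 - of_nat k / 2 + b / 2 - of_nat n / 2 + of_nat j) (k - j)
          * pochhammer (1/4 - of_nat k / 2 - b / 2 - of_nat n / 2 + of_nat j) (k - j))) b" by simp
  qed
qed



definition hc :: "nat \<Rightarrow> complex \<Rightarrow> complex \<Rightarrow> nat \<Rightarrow> complex" where
  "hc k a b m = (\<Prod>c\<leftarrow>[a/3, 1/3 + a/3, 2/3 + a/3]. pochhammer c m) /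
     (fact m * (\<Prod>c\<leftarrow>[3/4 + of_nat k / 2 + a / 2 + b / 2, 3/4 + of_nat k / 2 + a / 2 - b / 2]. pochhammer c m))"

lemma triple: "27^m * pochhammer (a/3) m * pochhammer (1/3 + a/3) m * pochhammer (2/3 + a/3) m = pochhammer (a::complex) (3*m)"
proof (induction m)
  case 0 show ?case by simp
next
  case (Suc m)
  have "pochhammer a (3 * Suc m) = pochhammer a (3*m) * pochhammer (a + of_nat (3*m)) 3"
    using pochhammer_product'[of a "3*m" 3] by (simp add: add.commute)
  also have "pochhammer (a + of_nat (3*m)) 3 = (a + 3 * of_nat m) * (a + 3 * of_nat m + 1) * (a + 3 * of_nat m + 2)"
    by (simp add: numeral_3_eq_3 pochhammer_Suc algebra_simps)
  also have "\<dots> = 27 * ((a/3 + of_nat m) * (1/3 + a/3 + of_nat m) * (2/3 + a/3 + of_nat m))"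
    by (simp add: algebra_simps)
  finally show ?case unfolding Suc[symmetric] by (simp add: pochhammer_Suc mult_ac)
qed

lemma alg5: fixes s P V W Q R fm fnm fn E F N :: complex
  assumes "fm \<noteq> 0" "fnm \<noteq> 0" "fn \<noteq> 0" "E \<noteq> 0" "F \<noteq> 0" "N = s * (fn / (fm * fnm)) * fm"
  shows "s * (P * (Q * V * W)) * R / (fm * fnm * E * F) = P * (Q * R) / fn * (N * V * W / (fm * E * F))"
  using assms by (simp add: field_simps)

lemma alg3': fixes E F P Q N V W M x :: complex
  assumes "x \<noteq> 0" "E \<noteq> 0" "F \<noteq> 0"
  shows "N * V * W / x * P * Q = (E * P) * (F * Q) * (N * V * W / (x * E * F))"
  using alg3[OF assms, of N V W P Q] by (simp add: mult_ac)

lemma core: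
  fixes a b :: complex and n k :: nat
  assumes he: "pochhammer (3/4 + of_nat k / 2 + a / 2 + b / 2) n \<noteq> 0"
    and hf: "pochhammer (3/4 + of_nat k / 2 + a / 2 - b / 2) n \<noteq> 0"
    and hbp: "pochhammer (1/2 + b) k \<noteq> 0" and hbm: "pochhammer (1/2 - b) k \<noteq> 0"
  shows "(\<Sum>m\<le>n. hc k a b m * (-27)^m * ((-a - 3 * of_nat m) gchoose (n-m)) * (-4)^(n-m)) = rhs_term k a b 1 n"
proof -
  define e where "e = 3/4 + of_nat k / 2 + a / 2 + b / 2"
  define f where "f = 3/4 + of_nat k / 2 + a / 2 - b / 2"
  define v where "v = of_nat n / 2 + a / 2"
  have em: "pochhammer e m \<noteq> 0" if "m \<le> n" for m using pochhammer_neq_0_mono[OF he that] unfolding e_def .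
  have fm: "pochhammer f m \<noteq> 0" if "m \<le> n" for m using pochhammer_neq_0_mono[OF hf that] unfolding f_def .
  define T where "T = (\<Sum>m\<le>n. pochhammer (- of_nat n) m * pochhammer v m * pochhammer (v + 1/2) m / (fact m * pochhammer e m * pochhammer f m))"
  define TP where "TP = (\<Sum>m\<le>n. pochhammer (- of_nat n) m * pochhammer v m * pochhammer (v + 1/2) m / fact m
          * pochhammer (e + of_nat m) (n - m) * pochhammer (f + of_nat m) (n - m))"
  define U where "U = (\<Sum>j\<le>k. pochhammer (- of_nat n) j * pochhammer v j * pochhammer (- of_nat k) j / fact j
          * pochhammer (1/4 - of_nat k / 2 + b / 2 - of_nat n / 2 + of_nat j) (k - j)
          * pochhammer (1/4 - of_nat k / 2 - b / 2 - of_nat n / 2 + of_nat j) (k - j))"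
  have stepA: "hc k a b m * (-27)^m * ((-a - 3 * of_nat m) gchoose (n-m)) * (-4)^(n-m)
      = pochhammer a n * 4^n / fact n * (pochhammer (- of_nat n) m * pochhammer v m * pochhammer (v + 1/2) m / (fact m * pochhammer e m * pochhammer f m))"
    if m: "m \<le> n" for m
  proof -
    have h1: "hc k a b m * (-27)^m = (-1)^m * pochhammer a (3*m) / (fact m * pochhammer e m * pochhammer f m)"
    proof -
      have "hc k a b m * (-27)^m = (-1)^m * (27^m * pochhammer (a/3) m * pochhammer (1/3 + a/3) m * pochhammer (2/3 + a/3) m)
           / (fact m * pochhammer e m * pochhammer f m)"
        unfolding hc_def e_def f_def by (simp add: power_mult_distrib[symmetric] mult_ac)
      thus ?thesis unfolding triple .
    qed
    have h2: "((-a - 3 * of_nat m) gchoose (n-m)) * (-4)^(n-m) = pochhammer (a + of_nat (3*m)) (n-m) * 4^(n-m) / fact (n-m)"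
    proof -
      have "((-a - 3 * of_nat m) gchoose (n-m)) * (-4)^(n-m) = ((-1)^(n-m) * (-4)^(n-m)) * pochhammer (a + 3 * of_nat m) (n-m) / fact (n-m)"
        unfolding gbinomial_pochhammer by (simp add: add.commute)
      also have "(-1)^(n-m) * (-4)^(n-m) = (4::complex)^(n-m)" by (simp add: power_mult_distrib[symmetric])
      finally show ?thesis by simp
    qed
    have h3: "pochhammer a (3*m) * pochhammer (a + of_nat (3*m)) (n-m) = pochhammer a n * (4^m * pochhammer v m * pochhammer (v + 1/2) m)"
    proof -
      have "pochhammer a (3*m) * pochhammer (a + of_nat (3*m)) (n-m) = pochhammer a (3*m + (n-m))"
        by (rule pochhammer_product'[symmetric])
      also have "3*m + (n-m) = n + 2*m" using m by simp
      also have "pochhammer a (n + 2*m) = pochhammer a n * pochhammer (a + of_nat n) (2*m)"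
        by (rule pochhammer_product')
      also have "a + of_nat n = 2 * v" unfolding v_def by simp
      also have "pochhammer (2 * v) (2*m) = of_nat (2^(2*m)) * pochhammer v m * pochhammer (v + 1/2) m"
        by (rule pochhammer_double)
      also have "(of_nat (2^(2*m)) :: complex) = 4^m" by (simp add: power_mult)
      finally show ?thesis .
    qed
    have h4: "pochhammer (- of_nat n :: complex) m = (-1)^m * (fact n / (fact m * fact (n-m))) * fact m"
      unfolding poch_nat_fact binomial_fact[OF m] ..
    have "hc k a b m * (-27)^m * ((-a - 3 * of_nat m) gchoose (n-m)) * (-4)^(n-m)
       = (-1)^m * (pochhammer a (3*m) * pochhammer (a + of_nat (3*m)) (n-m)) * 4^(n-m) / (fact m * fact (n-m) * pochhammer e m * pochhammer f m)"
    proof -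
      have "hc k a b m * (-27)^m * ((-a - 3 * of_nat m) gchoose (n-m)) * (-4)^(n-m)
          = (hc k a b m * (-27)^m) * (((-a - 3 * of_nat m) gchoose (n-m)) * (-4)^(n-m))" by (simp only: mult.assoc)
      also have "\<dots> = ((-1)^m * pochhammer a (3*m) / (fact m * pochhammer e m * pochhammer f m)) *
           (pochhammer (a + of_nat (3*m)) (n-m) * 4^(n-m) / fact (n-m))" unfolding h1 h2 ..
      finally show ?thesis by (simp add: mult_ac)
    qed
    also have "\<dots> = (-1)^m * (pochhammer a n * (4^m * pochhammer v m * pochhammer (v + 1/2) m)) * 4^(n-m) / (fact m * fact (n-m) * pochhammer e m * pochhammer f m)"
      unfolding h3 ..
    also have "\<dots> = pochhammer a n * (4^m * 4^(n-m)) / fact n * (pochhammer (- of_nat n) m * pochhammer v m * pochhammer (v + 1/2) m / (fact m * pochhammer e m * pochhammer f m))"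
      by (rule alg5[OF fact_nonzero fact_nonzero fact_nonzero em[OF m] fm[OF m] h4])
    also have "(4::complex)^m * 4^(n-m) = 4^n" using m by (simp add: power_add[symmetric])
    finally show ?thesis .
  qed
  have sumA: "(\<Sum>m\<le>n. hc k a b m * (-27)^m * ((-a - 3 * of_nat m) gchoose (n-m)) * (-4)^(n-m)) = pochhammer a n * 4^n / fact n * T"
    unfolding T_def sum_distrib_left by (rule sum.cong[OF refl]) (simp add: stepA)
  have TPT: "TP = pochhammer e n * pochhammer f n * T"
    unfolding TP_def T_def sum_distrib_left
  proof (rule sum.cong[OF refl])
    fix m assume "m \<in> {..n}" hence m: "m \<le> n" by simp
    show "pochhammer (- of_nat n) m * pochhammer v m * pochhammer (v + 1/2) m / fact m
          * pochhammer (e + of_nat m) (n - m) * pochhammer (f + of_nat m) (n - m) =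
        pochhammer e n * pochhammer f n * (pochhammer (- of_nat n) m * pochhammer v m * pochhammer (v + 1/2) m / (fact m * pochhammer e m * pochhammer f m))"
      unfolding pochhammer_product[OF m, of e] pochhammer_product[OF m, of f]
      by (rule alg3'[OF fact_nonzero em[OF m] fm[OF m]])
  qed
  have star: "4^n * pochhammer (1/2 + b) k * pochhammer (1/2 - b) k * TP
      = 4^k * pochhammer (1/2 - of_nat k - b) n * pochhammer (1/2 - of_nat k + b) n * U"
    unfolding TP_def U_def e_def f_def v_def by (rule STAR_all)
  have rhs: "rhs_term k a b 1 n = pochhammer a n * pochhammer (1/2 - of_nat k - b) n * pochhammer (1/2 - of_nat k + b) n
      / (fact n * pochhammer e n * pochhammer f n) * (4^k / (pochhammer (1/2 + b) k * pochhammer (1/2 - b) k) * U)"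
    unfolding rhs_term_def Q3_def U_def e_def f_def v_def by (simp add: atLeast0AtMost mult_ac)
  have enz: "pochhammer e n \<noteq> 0" using he unfolding e_def .
  have fnz: "pochhammer f n \<noteq> 0" using hf unfolding f_def .
  show ?thesis unfolding sumA rhs
  proof -
    have "4^k * pochhammer (1/2 - of_nat k - b) n * pochhammer (1/2 - of_nat k + b) n * U
        = 4^n * pochhammer (1/2 + b) k * pochhammer (1/2 - b) k * (pochhammer e n * pochhammer f n * T)"
      using star unfolding TPT by simp
    thus "pochhammer a n * 4 ^ n / fact n * T = pochhammer a n * pochhammer (1/2 - of_nat k - b) n * pochhammer (1/2 - of_nat k + b) n
      / (fact n * pochhammer e n * pochhammer f n) * (4^k / (pochhammer (1/2 + b) k * pochhammer (1/2 - b) k) * U)"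
      using enz fnz hbp hbm by (simp add: field_simps)
  qed
qed



lemma lim_lin: "(\<lambda>m. (c + of_nat m) / (of_nat m + 1)) \<longlonglongrightarrow> (1::complex)"
proof -
  have i: "(\<lambda>m. inverse (of_nat (Suc m) :: complex)) \<longlonglongrightarrow> 0"
    using LIMSEQ_Suc[OF lim_inverse_n] by simp
  have "(\<lambda>m. 1 + (c - 1) * inverse (of_nat (Suc m) :: complex)) \<longlonglongrightarrow> 1 + (c - 1) * 0"
    by (intro tendsto_intros i)
  moreover have "(c + of_nat m) / (of_nat m + 1) = 1 + (c - 1) * inverse (of_nat (Suc m) :: complex)" for m
  proof -
    have nz: "(of_nat m + 1 :: complex) \<noteq> 0" by (metis of_nat_Suc of_nat_eq_0_iff add.commute nat.simps(3))
    show ?thesis using nz by (simp add: field_simps)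
  qed
  ultimately show ?thesis by simp
qed

lemma hc_Suc: "hc k a b (Suc m) = hc k a b m *
   ((a/3 + of_nat m) * (1/3 + a/3 + of_nat m) * (2/3 + a/3 + of_nat m) /
    ((of_nat m + 1) * (3/4 + of_nat k / 2 + a / 2 + b / 2 + of_nat m) * (3/4 + of_nat k / 2 + a / 2 - b / 2 + of_nat m)))"
  unfolding hc_def by (simp add: pochhammer_Suc fact_Suc ac_simps)

lemma norm_pochhammer_le:
  fixes z :: complex and r :: real
  assumes "norm z \<le> r"
  shows "norm (pochhammer z j) \<le> pochhammer r j"
proof (induction j)
  case 0 show ?case by simp
next
  case (Suc j)
  have r0: "0 \<le> r" using assms norm_ge_zero order_trans by blast
  have "norm (pochhammer z (Suc j)) = norm (pochhammer z j) * norm (z + of_nat j)"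
    by (simp add: pochhammer_Suc norm_mult)
  also have "\<dots> \<le> pochhammer r j * (r + of_nat j)"
  proof (rule mult_mono[OF Suc])
    show "norm (z + of_nat j) \<le> r + of_nat j"
      using norm_triangle_ineq[of z "of_nat j"] assms by (simp add: norm_of_nat)
    show "0 \<le> pochhammer r j" unfolding pochhammer_prod by (rule prod_nonneg) (use r0 in auto)
  qed (use r0 in auto)
  also have "\<dots> = pochhammer r (Suc j)" by (simp add: pochhammer_Suc)
  finally show ?case .
qed

lemma alg6: fixes M X1 X2 X3 Y1 Y2 :: complex
  assumes "M \<noteq> 0"
  shows "X1 * X2 * X3 / (M * Y1 * Y2) = (X1 / M) * (X2 / M) * (X3 / M) / ((Y1 / M) * (Y2 / M))"
proof (cases "Y1 = 0 \<or> Y2 = 0")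
  case True thus ?thesis by auto
next
  case False thus ?thesis using assms by (simp add: field_simps power2_eq_square)
qed

lemma hc_summable:
  fixes a b :: complex and k :: nat
  assumes hl1: "\<And>m::nat. 3/4 + of_nat k / 2 + a / 2 + b / 2 \<noteq> - of_nat m"
    and hl2: "\<And>m::nat. 3/4 + of_nat k / 2 + a / 2 - b / 2 \<noteq> - of_nat m"
    and s: "0 \<le> s" "s \<le> 1/2"
  shows "summable (\<lambda>m. norm (hc k a b m) * s^m)"
proof -
  define \<rho> where "\<rho> m = (a/3 + of_nat m) * (1/3 + a/3 + of_nat m) * (2/3 + a/3 + of_nat m) /
    ((of_nat m + 1) * (3/4 + of_nat k / 2 + a / 2 + b / 2 + of_nat m) * (3/4 + of_nat k / 2 + a / 2 - b / 2 + of_nat m))" for m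
  have \<rho>eq: "\<rho> m = ((a/3 + of_nat m) / (of_nat m + 1)) * ((1/3 + a/3 + of_nat m) / (of_nat m + 1)) * ((2/3 + a/3 + of_nat m) / (of_nat m + 1))
     / (((3/4 + of_nat k / 2 + a / 2 + b / 2) + of_nat m) / (of_nat m + 1) * (((3/4 + of_nat k / 2 + a / 2 - b / 2) + of_nat m) / (of_nat m + 1)))" for m
  proof -
    have nz: "(of_nat m + 1 :: complex) \<noteq> 0" by (metis of_nat_Suc of_nat_eq_0_iff add.commute nat.simps(3))
    show ?thesis unfolding \<rho>_def by (rule alg6[OF nz])
  qed
  have "\<rho> \<longlonglongrightarrow> 1 * 1 * 1 / (1 * 1)"
    unfolding \<rho>eq by (intro tendsto_intros lim_lin) simp
  hence lim: "\<rho> \<longlonglongrightarrow> 1" by simp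
  have "eventually (\<lambda>m. dist (\<rho> m) 1 < 1/2) sequentially"
    using lim unfolding tendsto_iff by (metis divide_pos_pos zero_less_one zero_less_numeral)
  then obtain N where N: "\<And>m. m \<ge> N \<Longrightarrow> dist (\<rho> m) 1 < 1/2"
    by (auto simp: eventually_sequentially)
  have bound: "norm (\<rho> m) \<le> 3/2" if "m \<ge> N" for m
  proof -
    have "norm (\<rho> m) \<le> norm (\<rho> m - 1) + norm (1::complex)" using norm_triangle_ineq[of "\<rho> m - 1" 1] by simp
    also have "norm (\<rho> m - 1) < 1/2" using N[OF that] by (simp add: dist_norm)
    finally show ?thesis by simp
  qed
  show ?thesis
  proof (rule summable_ratio_test[of "3/4" N])
    fix m assume m: "m \<ge> N"
    have "norm (norm (hc k a b (Suc m)) * s ^ Suc m) = norm (hc k a b m) * norm (\<rho> m) * s * s^m"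
      using s by (simp add: hc_Suc \<rho>_def[symmetric] norm_mult abs_mult)
    also have "\<dots> \<le> norm (hc k a b m) * (3/2) * (1/2) * s^m"
      using bound[OF m] s by (intro mult_mono) (auto intro: mult_nonneg_nonneg)
    also have "\<dots> = 3/4 * norm (norm (hc k a b m) * s ^ m)" using s by (simp add: abs_mult)
    finally show "norm (norm (hc k a b (Suc m)) * s ^ Suc m) \<le> 3/4 * norm (norm (hc k a b m) * s ^ m)" .
  qed simp
qed



lemma gch_norm: "norm ((-(a::complex) - 3 * of_nat m) gchoose j) = norm (pochhammer (a + 3 * of_nat m) j) / fact j"
proof -
  have "((-a - 3 * of_nat m) gchoose j) = (-1)^j * pochhammer (a + 3 * of_nat m) j / fact j"
    unfolding gbinomial_pochhammer by (simp add: add.commute)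
  thus ?thesis by (simp add: norm_mult norm_divide norm_power)
qed

lemma p1r: "(-4*y)^j = (-1)^j * (4*(y::real))^j"
proof -
  have "-4*y = (-1) * (4*y)" by simp
  hence "(-4*y)^j = ((-1) * (4*y))^j" by (simp only:)
  also have "\<dots> = (-1)^j * (4*y)^j" by (rule power_mult_distrib)
  finally show ?thesis .
qed
lemma g1r: "((-(c::real)) gchoose j) = (-1)^j * pochhammer c j / fact j"
  unfolding gbinomial_pochhammer minus_minus ..
lemma ppr: "(-1)^j * (-1)^j = (1::real)"
proof -
  have "(-1)^j * (-1)^j = ((-1) * (-1::real))^j" by (rule power_mult_distrib[symmetric])
  thus ?thesis by simp
qed
lemma gch_real: "((-(c::real)) gchoose j) * (-4*y)^j = pochhammer c j / fact j * (4*y)^j"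
proof -
  have "((-c) gchoose j) * (-4*y)^j = ((-1)^j * (-1)^j) * (pochhammer c j / fact j * (4*y)^j)"
    unfolding p1r g1r by (simp only: times_divide_eq_left times_divide_eq_right ac_simps)
  thus ?thesis unfolding ppr by simp
qed

lemma double_series:
  fixes t :: "nat \<Rightarrow> complex" and a x :: complex and R :: "nat \<Rightarrow> complex"
  assumes x: "norm x < 1/100"
    and tS: "\<And>s. 0 \<le> s \<Longrightarrow> s \<le> 1/2 \<Longrightarrow> summable (\<lambda>m. norm (t m) * s^m)"
    and coef: "\<And>n. (\<Sum>m\<le>n. t m * (-27)^m * ((-a - 3 * of_nat m) gchoose (n-m)) * (-4)^(n-m)) = R n"
  shows "\<exists>S. (\<lambda>m. t m * (- 27 * x / (1 - 4 * x)^3)^m) sums ((1 - 4*x) powr a * S) \<and> (\<lambda>n. R n * x^n) sums S"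
proof -
  define y where "y = norm x"
  have y0: "0 \<le> y" and y1: "y < 1/100" using x by (auto simp: y_def)
  define w where "w = 1 - 4*x"
  have nx: "norm (-4*x) < 1" using x by (simp add: norm_mult)
  have w0: "w \<noteq> 0"
  proof
    assume "w = 0" hence "x = 1/4" unfolding w_def by (simp add: field_simps)
    with x show False by simp
  qed
  define G where "G = (\<lambda>(m,j). t m * (-27*x)^m * (((-a - 3 * of_nat m) gchoose j) * (-4*x)^j))"
  define rowG where "rowG m = t m * (-27*x)^m * (1 + (-4*x)) powr (-a - 3 * of_nat m)" for m
  have rowsG: "(\<lambda>j. G (m,j)) sums rowG m" for m
    unfolding G_def rowG_def using sums_mult[OF gen_binomial_complex[OF nx, of "-a - 3 * of_nat m"], of "t m * (-27*x)^m"]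
    by simp
  define na where "na = norm a"
  define H where "H = (\<lambda>(m,j). norm (t m) * (27*y)^m * (pochhammer (na + 3 * of_nat m) j / fact j * (4*y)^j))"
  define rowH where "rowH m = norm (t m) * (27*y)^m * (1 + (-4*y)) powr (-(na + 3 * of_nat m))" for m
  have ny: "\<bar>-4*y\<bar> < 1" using y0 y1 by simp
  have pnn: "0 \<le> pochhammer (na + 3 * of_nat m) j" for m j
    unfolding pochhammer_prod by (rule prod_nonneg) (auto simp: na_def)
  have Hnn: "0 \<le> H (m,j)" for m j unfolding H_def prod.case using pnn[of m j] y0
    by (intro mult_nonneg_nonneg divide_nonneg_nonneg zero_le_power) auto
  have rowsH: "(\<lambda>j. H (m,j)) sums rowH m" for m
  proof -
    have eq: "((-(na + 3 * of_nat m)) gchoose j) * (-4*y)^j = pochhammer (na + 3 * of_nat m) j / fact j * (4*y)^j" for j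
      by (rule gch_real)
    have bs: "(\<lambda>j. ((-(na + 3 * of_nat m)) gchoose j) * (-4*y)^j) sums (1 + (-4*y)) powr (-(na + 3 * of_nat m))"
      by (rule gen_binomial_real[OF ny])
    hence "(\<lambda>j. pochhammer (na + 3 * of_nat m) j / fact j * (4*y)^j) sums (1 + (-4*y)) powr (-(na + 3 * of_nat m))"
      unfolding eq .
    from sums_mult[OF this, of "norm (t m) * (27*y)^m"]
    show ?thesis unfolding H_def rowH_def prod.case .
  qed
  define s where "s = 27*y / (1 - 4*y)^3"
  have w4: "0 < 1 - 4*y" using y1 by simp
  have s0: "0 \<le> s" unfolding s_def using y0 w4 by simp
  have s1: "s \<le> 1/2"
  proof -
    have "1 + of_nat 3 * (-4*y) \<le> (1 + (-4*y))^3" by (rule Bernoulli_inequality) (use y1 in simp)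
    hence b: "1 - 12*y \<le> (1 - 4*y)^3" by simp
    have "27 * y \<le> 1/2 * (1 - 4*y)^3" using b y1 by simp
    thus ?thesis unfolding s_def using w4 by (simp add: divide_le_eq)
  qed
  have rowH_eq: "rowH m = (1 - 4*y) powr (-na) * (norm (t m) * s^m)" for m
  proof -
    have "(1 + (-4*y)) powr (-(na + 3 * of_nat m)) = (1 - 4*y) powr (-na) * inverse ((1 - 4*y) powr (real (3*m)))"
      by (simp add: powr_add[symmetric] powr_minus[symmetric] algebra_simps)
    also have "(1 - 4*y) powr (real (3*m)) = (1 - 4*y)^(3*m)" using w4 by (rule powr_realpow)
    finally have "(1 + (-4*y)) powr (-(na + 3 * of_nat m)) = (1 - 4*y) powr (-na) * inverse ((1 - 4*y)^(3*m))" .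
    moreover have "(27*y)^m * inverse ((1 - 4*y)^(3*m)) = s^m"
    proof -
      have "s^m = (27*y)^m / ((1 - 4*y)^3)^m" unfolding s_def by (rule power_divide)
      also have "((1 - 4*y)^3)^m = (1 - 4*y)^(3*m)" by (rule power_mult[symmetric])
      finally show ?thesis by (simp add: divide_inverse)
    qed
    ultimately show ?thesis unfolding rowH_def by (simp add: mult_ac)
  qed
  have rowH_summ: "summable rowH"
    unfolding rowH_eq by (rule summable_mult[OF tS[OF s0 s1]])
  have rowH_nn: "0 \<le> rowH m" for m
    unfolding rowH_def using y0 w4 by simp
  have Hsum: "H summable_on (UNIV \<times> UNIV)"
  proof (rule summable_on_SigmaI[where g = rowH])
    fix m :: nat assume "m \<in> UNIV"
    show "((\<lambda>j. H (m,j)) has_sum rowH m) UNIV"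
      by (rule norm_summable_imp_has_sum[OF _ rowsH]) (use rowsH Hnn in \<open>simp add: sums_summable[OF rowsH]\<close>)
  next
    show "rowH summable_on UNIV" using rowH_summ rowH_nn by (simp add: summable_on_UNIV_nonneg_real_iff)
  next
    fix m j show "0 \<le> H (m, j)" by (rule Hnn)
  qed
  have GH: "norm (G (m,j)) \<le> H (m,j)" for m j
  proof -
    have "norm (a + 3 * of_nat m) \<le> na + 3 * of_nat m"
      using norm_triangle_ineq[of a "3 * of_nat m"] by (simp add: na_def norm_mult)
    hence p: "norm (pochhammer (a + 3 * of_nat m) j) \<le> pochhammer (na + 3 * of_nat m) j"
      by (rule norm_pochhammer_le)
    have "norm (G (m,j)) = norm (t m) * (27*y)^m * (norm (pochhammer (a + 3 * of_nat m) j) / fact j * (4*y)^j)"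
      unfolding G_def y_def by (simp add: norm_mult norm_power gch_norm)
    also have "\<dots> \<le> H (m,j)"
      unfolding H_def using p y0 by (auto intro!: mult_left_mono mult_right_mono divide_right_mono)
    finally show ?thesis .
  qed
  have Gabs: "(\<lambda>p. norm (G p)) summable_on (UNIV \<times> UNIV)"
    by (rule summable_on_comparison_test[OF Hsum]) (use GH in auto)
  have "G summable_on (UNIV \<times> UNIV)" by (rule abs_summable_summable[OF Gabs])
  then obtain S where GS: "(G has_sum S) (UNIV \<times> UNIV)" by (auto simp: summable_on_def)
  have rowsG': "((\<lambda>j. G (m,j)) has_sum rowG m) UNIV" for m
  proof (rule norm_summable_imp_has_sum[OF _ rowsG])
    show "summable (\<lambda>j. norm (G (m, j)))"
      by (rule summable_comparison_test'[OF sums_summable[OF rowsH[of m]]]) (use GH in simp)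
  qed
  have rowGS: "rowG sums S"
    using has_sum_SigmaD[OF GS rowsG'] by (rule has_sum_imp_sums)
  define \<phi> :: "nat \<times> nat \<Rightarrow> nat \<times> nat" where "\<phi> = (\<lambda>(n,i). (i, n-i))"
  have bij: "bij_betw \<phi> (SIGMA n:UNIV. {..n}) (UNIV \<times> UNIV)"
    by (rule bij_betw_byWitness[where f' = "\<lambda>(i,j). (i+j, i)"]) (auto simp: \<phi>_def)
  have GS2: "((\<lambda>p. G (\<phi> p)) has_sum S) (SIGMA n:UNIV. {..n})"
    using has_sum_reindex_bij_betw[OF bij, of G S] GS by simp
  have fin: "((\<lambda>i. G (\<phi> (n,i))) has_sum (\<Sum>i\<le>n. G (\<phi> (n,i)))) {..n}" for n
    by (rule has_sum_finite) simp
  have diagS: "(\<lambda>n. \<Sum>i\<le>n. G (\<phi> (n,i))) sums S"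
    using has_sum_SigmaD[OF GS2 fin] by (rule has_sum_imp_sums)
  have diag_eq: "(\<Sum>i\<le>n. G (\<phi> (n,i))) = R n * x^n" for n
  proof -
    have "(\<Sum>i\<le>n. G (\<phi> (n,i))) = (\<Sum>i\<le>n. x^n * (t i * (-27)^i * ((-a - 3 * of_nat i) gchoose (n-i)) * (-4)^(n-i)))"
    proof (rule sum.cong[OF refl])
      fix i assume "i \<in> {..n}" hence i: "i \<le> n" by simp
      have xx: "x^i * x^(n-i) = x^n" using i by (simp add: power_add[symmetric])
      show "G (\<phi> (n,i)) = x^n * (t i * (-27)^i * ((-a - 3 * of_nat i) gchoose (n-i)) * (-4)^(n-i))"
      proof -
        have q1: "(-27*x)^i = (-27)^i * x^i" by (rule power_mult_distrib)
        have q2: "(-4*x)^(n-i) = (-4)^(n-i) * x^(n-i)" by (rule power_mult_distrib)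
        show ?thesis unfolding G_def \<phi>_def prod.case q1 q2 xx[symmetric] by (simp only: ac_simps)
      qed
    qed
    also have "\<dots> = x^n * R n" unfolding sum_distrib_left[symmetric] coef ..
    finally show ?thesis by simp
  qed
  have hyp_eq: "t m * (- 27 * x / (1 - 4 * x)^3)^m = w powr a * rowG m" for m
  proof -
    have "w powr a * w powr (-a - 3 * of_nat m) = w powr (- of_nat (3*m))"
      by (simp add: powr_add[symmetric])
    also have "\<dots> = inverse (w powr of_nat (3*m))" by (rule powr_minus)
    also have "w powr of_nat (3*m) = w^(3*m)" by (rule powr_nat') (simp add: w0)
    finally have e1: "w powr a * w powr (-a - 3 * of_nat m) = inverse (w^(3*m))" .
    have "w powr a * rowG m = t m * (-27*x)^m * (w powr a * w powr (-a - 3 * of_nat m))"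
      unfolding rowG_def w_def by (simp add: mult_ac)
    also have "\<dots> = t m * (-27*x)^m * inverse (w^(3*m))" unfolding e1 ..
    also have "\<dots> = t m * (- 27 * x / w^3)^m"
    proof -
      have "(- 27 * x / w^3)^m = (-27*x)^m / (w^3)^m" by (rule power_divide)
      also have "(w^3)^m = w^(3*m)" by (rule power_mult[symmetric])
      finally show ?thesis by (simp add: divide_inverse mult.assoc)
    qed
    finally show ?thesis unfolding w_def by simp
  qed
  have "(\<lambda>m. t m * (- 27 * x / (1 - 4 * x)^3)^m) sums (w powr a * S)"
    unfolding hyp_eq by (rule sums_mult[OF rowGS])
  moreover have "(\<lambda>n. R n * x^n) sums S" using diagS unfolding diag_eq .
  ultimately show ?thesis unfolding w_def by blast
qed


theorem theorem2:
  fixes k :: nat and a b :: complex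
  assumes hb: "\<And>j::nat. j < k \<Longrightarrow> b \<noteq> 1/2 + of_nat j \<and> b \<noteq> - (1/2 + of_nat j)"
    and hl1: "\<And>m::nat. 3/4 + of_nat k / 2 + a / 2 + b / 2 \<noteq> - of_nat m"
    and hl2: "\<And>m::nat. 3/4 + of_nat k / 2 + a / 2 - b / 2 \<noteq> - of_nat m"
  shows "\<exists>r>0. \<forall>x::complex. norm x < r \<longrightarrow>
    (let as = [a/3, 1/3 + a/3, 2/3 + a/3];
         bs = [3/4 + of_nat k / 2 + a / 2 + b / 2, 3/4 + of_nat k / 2 + a / 2 - b / 2];
         z = - 27 * x / (1 - 4 * x) ^ 3
     in summable (hyp_term as bs z) \<and> summable (rhs_term k a b x) \<and>
        hypF as bs z = (1 - 4 * x) powr a * (\<Sum>n. rhs_term k a b x n))"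
proof -
  have he: "pochhammer (3/4 + of_nat k / 2 + a / 2 + b / 2) n \<noteq> 0" for n
    using hl1 by (auto simp: pochhammer_eq_0_iff)
  have hf: "pochhammer (3/4 + of_nat k / 2 + a / 2 - b / 2) n \<noteq> 0" for n
    using hl2 by (auto simp: pochhammer_eq_0_iff)
  have hbp: "pochhammer (1/2 + b) k \<noteq> 0"
  proof
    assume "pochhammer (1/2 + b) k = 0"
    then obtain i where i: "i < k" and h: "1/2 + b = - of_nat i" by (auto simp: pochhammer_eq_0_iff)
    have "b = - (1/2 + of_nat i)" using h by (simp add: algebra_simps eq_neg_iff_add_eq_0)
    with hb[OF i] show False by simp
  qed
  have hbm: "pochhammer (1/2 - b) k \<noteq> 0"
  proof
    assume "pochhammer (1/2 - b) k = 0"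
    then obtain i where i: "i < k" and h: "1/2 - b = - of_nat i" by (auto simp: pochhammer_eq_0_iff)
    have "b = 1/2 + of_nat i" using h by (simp add: algebra_simps)
    with hb[OF i] show False by simp
  qed
  have coef: "(\<Sum>m\<le>n. hc k a b m * (-27)^m * ((-a - 3 * of_nat m) gchoose (n-m)) * (-4)^(n-m)) = rhs_term k a b 1 n" for n
    by (rule core[OF he hf hbp hbm])
  have tS: "summable (\<lambda>m. norm (hc k a b m) * s^m)" if "0 \<le> s" "s \<le> 1/2" for s
    by (rule hc_summable[OF hl1 hl2 that])
  show ?thesis
  proof (intro exI[of _ "1/100"] conjI allI impI)
    show "(0::real) < 1/100" by simp
  next
    fix x :: complex assume x: "norm x < 1/100"
    obtain S where S1: "(\<lambda>m. hc k a b m * (- 27 * x / (1 - 4 * x)^3)^m) sums ((1 - 4*x) powr a * S)"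
      and S2: "(\<lambda>n. rhs_term k a b 1 n * x^n) sums S"
      using double_series[OF x tS coef] by blast
    have hypeq: "hyp_term [a/3, 1/3 + a/3, 2/3 + a/3] [3/4 + of_nat k / 2 + a / 2 + b / 2, 3/4 + of_nat k / 2 + a / 2 - b / 2] z
        = (\<lambda>m. hc k a b m * z^m)" for z
      by (rule ext) (unfold hyp_term_def hc_def, rule refl)
    have rhseq: "rhs_term k a b x = (\<lambda>n. rhs_term k a b 1 n * x^n)"
      by (rule ext) (simp add: rhs_term_def)
    show "let as = [a/3, 1/3 + a/3, 2/3 + a/3];
         bs = [3/4 + of_nat k / 2 + a / 2 + b / 2, 3/4 + of_nat k / 2 + a / 2 - b / 2];
         z = - 27 * x / (1 - 4 * x) ^ 3
     in summable (hyp_term as bs z) \<and> summable (rhs_term k a b x) \<and>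
        hypF as bs z = (1 - 4 * x) powr a * (\<Sum>n. rhs_term k a b x n)"
      unfolding Let_def hypF_def hypeq rhseq using S1 S2 by (auto simp: sums_iff)
  qed
qed

end
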